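(* Every normal uniform Kan complex $A$ has a normal connection $c:A^{\mathrm{I}}\to A^{\mathrm{I}\times\mathrm{I}}$.
   Context: Let $\mathbb{B}$ be the category of finite sets $[n]=\{\bot,x_1,\dots,x_n,\top\}$ ($n\ge0$, $\bot\ne\top$) and functions preserving $\bot,\top$; cartesian cubical sets are presheaves on $\mathbb{B}^{op}$. $\mathrm{I}^n$ is the representable on $[n]$, $\mathrm{I}^n\cong\mathrm{I}\times\dots\times\mathrm{I}$, $\mathrm{I}=\mathrm{I}^1$, $\mathrm{I}^0=1$; maps $\mathrm{I}^n\to X$ correspond to $n$-cubes of $X$. The two maps $[1]\to[0]$ give endpoints $0,1:1\to\mathrm{I}$. For $1\le i\le n$, $d\in\{0,1\}$, the face $\alpha_i^d:\mathrm{I}^{n-1}\to\mathrm{I}^n$ inserts $d$ in coordinate $i$; for $e\in\{0,1\}$ the open box $\sqcup^n_e\rightarrowtail\mathrm{I}^n$ is the union of the images of all faces $\alpha_i^d$ with $(i,d)\ne(1,e)$, with inclusion $i^n_e$. A uniform Kan complex is a cubical set $A$ with, for each $n\ge1$, $e\in\{0,1\}$, $k\ge1$ and $b:\mathrm{I}^k\times\sqcup^n_e\to A$, a chosen extension $\phi(b):\mathrm{I}^k\times\mathrm{I}^n\to A$ of $b$ along $1\times i^n_e$, with $\phi(b(\alpha\times1))=\phi(b)(\alpha\times1)$ for all $\alpha:\mathrm{I}^j\to\mathrm{I}^k$ ($j\ge1$). It is normal if for all $n\ge0$, $e$, $k\ge1$ and $c:\mathrm{I}^k\times\mathrm{I}^n\to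 A$, with $\pi:\mathrm{I}^{n+1}\to\mathrm{I}^n$ forgetting the first coordinate, $\phi(c(1\times\pi)(1\times i^{n+1}_e))=c(1\times\pi)$. A connection on $X$ is a map of cubical sets $c:X^{\mathrm{I}}\to X^{\mathrm{I}\times\mathrm{I}}$ such that for every $n$-cube $a:\mathrm{I}^n\times\mathrm{I}\to X$ of $X^{\mathrm{I}}$, with $a_0=a(1\times0)$, the map $c(a):\mathrm{I}^n\times\mathrm{I}\times\mathrm{I}\to X$ (coordinates $(u,s,t)$) restricts on $s=1$ to $a$ and on $s=0$ and on $t=0$ to the constant path at $a_0$. It is normal if $c(x\circ\mathrm{pr})=x\circ\mathrm{pr}'$ for every $n$-cube $x:\mathrm{I}^n\to X$, where $\mathrm{pr}:\mathrm{I}^n\times\mathrm{I}\to\mathrm{I}^n$ and $\mathrm{pr}':\mathrm{I}^n\times\mathrm{I}\times\mathrm{I}\to\mathrm{I}^n$ are projections (i.e. $c$ sends constant paths to doubly degenerate squares). *)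

theory Defs
  imports Main
begin

text \<open>An element of [m] = {bot, x_1, ..., x_m, top}: Bot, Top, or V j standing for x_(j+1), j < m.\<close>
datatype pt = Bot | Top | V nat

definition valid_pt :: "nat \<Rightarrow> pt \<Rightarrow> bool" where
  "valid_pt m p \<longleftrightarrow> (case p of V j \<Rightarrow> j < m | _ \<Rightarrow> True)"

text \<open>A morphism [n] -> [m] of B (preserving bot, top) is determined by the images of
  x_1..x_n: a list of length n of points of [m].\<close>
definition hom :: "nat \<Rightarrow> nat \<Rightarrow> pt list set" where
  "hom n m = {f. length f = n \<and> (\<forall>p\<in>set f. valid_pt m p)}"

fun app :: "pt list \<Rightarrow> pt \<Rightarrow> pt" where
  "app g Bot = Bot"
| "app g Top = Top"
| "app g (V i) = g ! i"

definition comp :: "pt list \<Rightarrow> pt list \<Rightarrow> pt list" where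
  "comp g f = map (app g) f"

definition idm :: "nat \<Rightarrow> pt list" where
  "idm n = map V [0..<n]"

text \<open>endpoints: False = 0 = bot, True = 1 = top\<close>
definition ep :: "bool \<Rightarrow> pt" where
  "ep d = (if d then Top else Bot)"

text \<open>The B-morphism [n] -> [n-1] inducing the face alpha_i^d : I^(n-1) -> I^n
  (x_i goes to d, the other generators go in order to x_1..x_(n-1)).\<close>
definition face :: "nat \<Rightarrow> nat \<Rightarrow> bool \<Rightarrow> pt list" where
  "face n i d = map (\<lambda>j. if j + 1 < i then V j else if j + 1 = i then ep d else V (j - 1)) [0..<n]"

section \<open>Cartesian cubical sets (covariant functors B -> Set)\<close>

record 'a cset =
  cells :: "nat \<Rightarrow> 'a set"
  act :: "nat \<Rightarrow> pt list \<Rightarrow> 'a \<Rightarrow> 'a"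
  \<comment> \<open>act X m f x: the action of f : [n] -> [m] (n = length f) on an n-cell x\<close>

definition is_cset :: "'a cset \<Rightarrow> bool" where
  "is_cset X \<longleftrightarrow>
     (\<forall>n m f x. f \<in> hom n m \<and> x \<in> cells X n \<longrightarrow> act X m f x \<in> cells X m) \<and>
     (\<forall>n x. x \<in> cells X n \<longrightarrow> act X n (idm n) x = x) \<and>
     (\<forall>n m k f g x. f \<in> hom n m \<and> g \<in> hom m k \<and> x \<in> cells X n \<longrightarrow>
        act X k (comp g f) x = act X k g (act X m f x))"

definition is_cmap :: "'a cset \<Rightarrow> 'b cset \<Rightarrow> (nat \<Rightarrow> 'a \<Rightarrow> 'b) \<Rightarrow> bool" where
  "is_cmap X Y \<alpha> \<longleftrightarrow>
     (\<forall>n x. x \<in> cells X n \<longrightarrow> \<alpha> n x \<in> cells Y n) \<and>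
     (\<forall>n m f x. f \<in> hom n m \<and> x \<in> cells X n \<longrightarrow> \<alpha> m (act X m f x) = act Y m f (\<alpha> n x))"

text \<open>the representable I^k = Hom_B([k], -)\<close>
definition rep :: "nat \<Rightarrow> pt list cset" where
  "rep k = \<lparr>cells = (\<lambda>m. hom k m), act = (\<lambda>m f g. comp f g)\<rparr>"

text \<open>products I^(k_1) x ... x I^(k_r) of representables: tuples of morphisms\<close>
definition prod_rep :: "nat list \<Rightarrow> nat \<Rightarrow> pt list list set" where
  "prod_rep ks m = {gs. length gs = length ks \<and> (\<forall>i<length ks. gs ! i \<in> hom (ks ! i) m)}"

text \<open>maps S -> X, where S is the subobject of a product of representables given by
  the predicate S; represented extensionally (undefined outside S).\<close>
definition is_pmap :: "'a cset \<Rightarrow> nat list \<Rightarrow> (nat \<Rightarrow> pt list list \<Rightarrow> bool)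
                      \<Rightarrow> (nat \<Rightarrow> pt list list \<Rightarrow> 'a) \<Rightarrow> bool" where
  "is_pmap X ks S b \<longleftrightarrow>
     (\<forall>m gs. gs \<in> prod_rep ks m \<and> S m gs \<longrightarrow> b m gs \<in> cells X m) \<and>
     (\<forall>m m' f gs. gs \<in> prod_rep ks m \<and> S m gs \<and> f \<in> hom m m' \<longrightarrow>
        b m' (map (comp f) gs) = act X m' f (b m gs)) \<and>
     (\<forall>m gs. \<not> (gs \<in> prod_rep ks m \<and> S m gs) \<longrightarrow> b m gs = undefined)"

definition restr :: "nat list \<Rightarrow> (nat \<Rightarrow> pt list list \<Rightarrow> bool)
                     \<Rightarrow> (nat \<Rightarrow> pt list list \<Rightarrow> 'a) \<Rightarrow> (nat \<Rightarrow> pt list list \<Rightarrow> 'a)" where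
  "restr ks S b = (\<lambda>m gs. if gs \<in> prod_rep ks m \<and> S m gs then b m gs else undefined)"

definition allp :: "nat \<Rightarrow> pt list list \<Rightarrow> bool" where
  "allp m gs = True"

text \<open>exponential X^Y for Y = I^(k_1) x ... x I^(k_r): (X^Y)_n = Hom(I^n x Y, X)\<close>
definition exp_cset :: "'a cset \<Rightarrow> nat list \<Rightarrow> (nat \<Rightarrow> pt list list \<Rightarrow> 'a) cset" where
  "exp_cset X ks = \<lparr>cells = (\<lambda>n. {a. is_pmap X (n # ks) allp a}),
     act = (\<lambda>m f a. restr (m # ks) allp (\<lambda>m' gs. a m' (comp (hd gs) f # tl gs)))\<rparr>"

text \<open>I^k x (open box of dimension n, missing face (1,e)), as subobject of I^k x I^n:
  the second component lies in the union of the images of the faces alpha_i^d.\<close>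
definition box :: "nat \<Rightarrow> bool \<Rightarrow> nat \<Rightarrow> pt list list \<Rightarrow> bool" where
  "box n e m gs \<longleftrightarrow> (\<exists>i d. 1 \<le> i \<and> i \<le> n \<and> (i, d) \<noteq> (1, e) \<and>
      (\<exists>h' \<in> hom (n - 1) m. gs ! 1 = comp h' (face n i d)))"

definition uniform_kan :: "'a cset \<Rightarrow>
   (nat \<Rightarrow> bool \<Rightarrow> nat \<Rightarrow> (nat \<Rightarrow> pt list list \<Rightarrow> 'a) \<Rightarrow> (nat \<Rightarrow> pt list list \<Rightarrow> 'a)) \<Rightarrow> bool" where
  "uniform_kan X \<phi> \<longleftrightarrow>
    (\<forall>n e k b. 1 \<le> n \<and> 1 \<le> k \<and> is_pmap X [k, n] (box n e) b \<longrightarrow>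
       is_pmap X [k, n] allp (\<phi> n e k b) \<and>
       (\<forall>m gs. gs \<in> prod_rep [k, n] m \<and> box n e m gs \<longrightarrow> \<phi> n e k b m gs = b m gs) \<and>
       (\<forall>j \<alpha>. 1 \<le> j \<and> is_cmap (rep j) (rep k) \<alpha> \<longrightarrow>
          \<phi> n e j (restr [j, n] (box n e) (\<lambda>m gs. b m [\<alpha> m (gs ! 0), gs ! 1]))
          = restr [j, n] allp (\<lambda>m gs. \<phi> n e k b m [\<alpha> m (gs ! 0), gs ! 1])))"

text \<open>normality; the projection I^(n+1) -> I^n forgetting the first coordinate is tl\<close>
definition normal_kan :: "'a cset \<Rightarrow>
   (nat \<Rightarrow> bool \<Rightarrow> nat \<Rightarrow> (nat \<Rightarrow> pt list list \<Rightarrow> 'a) \<Rightarrow> (nat \<Rightarrow> pt list list \<Rightarrow> 'a)) \<Rightarrow> bool" where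
  "normal_kan X \<phi> \<longleftrightarrow>
    (\<forall>n e k c. 1 \<le> k \<and> is_pmap X [k, n] allp c \<longrightarrow>
       \<phi> (n + 1) e k (restr [k, n + 1] (box (n + 1) e) (\<lambda>m gs. c m [gs ! 0, tl (gs ! 1)]))
       = restr [k, n + 1] allp (\<lambda>m gs. c m [gs ! 0, tl (gs ! 1)]))"

definition normal_uniform_kan :: "'a cset \<Rightarrow> bool" where
  "normal_uniform_kan X \<longleftrightarrow> is_cset X \<and> (\<exists>\<phi>. uniform_kan X \<phi> \<and> normal_kan X \<phi>)"

text \<open>c : X^I -> X^(I x I); cells of X^(I x I) at n are maps on tuples (u, s, t).\<close>
definition is_connection :: "'a cset \<Rightarrow>
   (nat \<Rightarrow> (nat \<Rightarrow> pt list list \<Rightarrow> 'a) \<Rightarrow> (nat \<Rightarrow> pt list list \<Rightarrow> 'a)) \<Rightarrow> bool" where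
  "is_connection X c \<longleftrightarrow>
     is_cmap (exp_cset X [1]) (exp_cset X [1, 1]) c \<and>
     (\<forall>n a. a \<in> cells (exp_cset X [1]) n \<longrightarrow>
        (\<forall>m h s t. h \<in> hom n m \<and> s \<in> hom 1 m \<and> t \<in> hom 1 m \<longrightarrow>
           c n a m [h, [Top], t] = a m [h, t] \<and>
           c n a m [h, [Bot], t] = a m [h, [Bot]] \<and>
           c n a m [h, s, [Bot]] = a m [h, [Bot]]))"

definition normal_connection :: "'a cset \<Rightarrow>
   (nat \<Rightarrow> (nat \<Rightarrow> pt list list \<Rightarrow> 'a) \<Rightarrow> (nat \<Rightarrow> pt list list \<Rightarrow> 'a)) \<Rightarrow> bool" where
  "normal_connection X c \<longleftrightarrow>
     (\<forall>n x. is_pmap X [n] allp x \<longrightarrow>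
        c n (restr [n, 1] allp (\<lambda>m gs. x m [hd gs]))
        = restr [n, 1, 1] allp (\<lambda>m gs. x m [hd gs]))"

end

theory Submission imports Defs begin

lemma hom_iff: "f \<in> hom n m \<longleftrightarrow> length f = n \<and> (\<forall>p\<in>set f. valid_pt m p)"
  by (simp add: hom_def)

lemma valid_simps[simp]: "valid_pt m Bot" "valid_pt m Top" "valid_pt m (V j) \<longleftrightarrow> j < m"
  by (auto simp: valid_pt_def)

lemma hom_0[simp]: "f \<in> hom 0 m \<longleftrightarrow> f = []" by (auto simp: hom_def)
lemma hom_Suc: "f \<in> hom (Suc n) m \<longleftrightarrow> (\<exists>p q. f = p # q \<and> valid_pt m p \<and> q \<in> hom n m)"
  by (auto simp: hom_def length_Suc_conv)
lemma Cons_hom[simp]: "p # q \<in> hom k m \<longleftrightarrow> (\<exists>n. k = Suc n \<and> valid_pt m p \<and> q \<in> hom n m)"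
  by (auto simp: hom_def)
lemma Nil_hom[simp]: "[] \<in> hom k m \<longleftrightarrow> k = 0" by (auto simp: hom_def)

lemma prod_rep_iff: "gs \<in> prod_rep ks m \<longleftrightarrow> list_all2 (\<lambda>g k. g \<in> hom k m) gs ks"
  by (auto simp: prod_rep_def list_all2_conv_all_nth)

lemma app_valid: "f \<in> hom n m \<Longrightarrow> valid_pt n p \<Longrightarrow> valid_pt m (app f p)"
  by (cases p) (auto simp: hom_def valid_pt_def)

lemma comp_hom: "f \<in> hom n m \<Longrightarrow> g \<in> hom m k \<Longrightarrow> comp g f \<in> hom n k"
  by (auto simp: comp_def hom_iff intro: app_valid[of g m k])

lemma app_app: "valid_pt (length g) p \<Longrightarrow> app (comp h g) p = app h (app g p)"
  by (cases p) (auto simp: comp_def valid_pt_def)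

lemma comp_assoc: "f \<in> hom n (length g) \<Longrightarrow> comp h (comp g f) = comp (comp h g) f"
proof -
  assume "f \<in> hom n (length g)"
  then have "\<forall>p\<in>set f. valid_pt (length g) p" by (simp add: hom_iff)
  then show ?thesis by (auto simp: comp_def app_app[unfolded comp_def])
qed

lemma face21: "face 2 1 d = [ep d, V 0]"
  by (simp add: face_def upt_rec)
lemma face21': "face 2 (Suc 0) d = [ep d, V 0]"
  by (simp add: face_def upt_rec)
lemma face22: "face 2 2 d = [V 0, ep d]"
  by (simp add: face_def upt_rec)

lemma box2: assumes "valid_pt m t" "valid_pt m s"
  shows "box 2 True m [g, [t, s]] \<longleftrightarrow> (t = Bot \<or> s = Bot \<or> s = Top)"
proof
  assume "box 2 True m [g, [t, s]]"
  then obtain i d h' where i: "1 \<le> i" "i \<le> 2" "(i, d) \<noteq> (1, True)" "h' \<in> hom 1 m"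
    and e: "[t, s] = comp h' (face 2 i d)" unfolding box_def by auto
  from i have "i = 1 \<or> i = 2" by auto
  then show "t = Bot \<or> s = Bot \<or> s = Top"
    using e i by (auto simp: face21 face21' face22 comp_def ep_def hom_Suc split: if_splits)
next
  assume h: "t = Bot \<or> s = Bot \<or> s = Top"
  show "box 2 True m [g, [t, s]]"
  proof (cases "t = Bot")
    case True
    then show ?thesis unfolding box_def using assms
      by (intro exI[of _ 1] exI[of _ False]) (auto simp: face21 face21' comp_def ep_def intro!: bexI[of _ "[s]"])
  next
    case False
    then obtain d where "s = ep d" using h by (auto simp: ep_def)
    then show ?thesis unfolding box_def using assms
      by (intro exI[of _ 2] exI[of _ d]) (auto simp: face22 comp_def ep_def intro!: bexI[of _ "[t]"])
  qed
qed


lemma pmap_nat: "is_pmap X ks S b \<Longrightarrow> gs \<in> prod_rep ks m \<Longrightarrow> S m gs \<Longrightarrow> f \<in> hom m m' \<Longrightarrow>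
   b m' (map (comp f) gs) = act X m' f (b m gs)"
  unfolding is_pmap_def by blast
lemma pmap_cells: "is_pmap X ks S b \<Longrightarrow> gs \<in> prod_rep ks m \<Longrightarrow> S m gs \<Longrightarrow> b m gs \<in> cells X m"
  unfolding is_pmap_def by blast
lemma pmap_undef: "is_pmap X ks S b \<Longrightarrow> \<not> (gs \<in> prod_rep ks m \<and> S m gs) \<Longrightarrow> b m gs = undefined"
  unfolding is_pmap_def by blast

lemma restr_out: "\<not> (gs \<in> prod_rep ks m \<and> S m gs) \<Longrightarrow> restr ks S b m gs = undefined"
  unfolding restr_def by (rule if_not_P)
lemma restr_in: "gs \<in> prod_rep ks m \<Longrightarrow> S m gs \<Longrightarrow> restr ks S b m gs = b m gs"
  unfolding restr_def by simp

definition shiftp :: "pt \<Rightarrow> pt" where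
  "shiftp p = (case p of V i \<Rightarrow> V (Suc i) | q \<Rightarrow> q)"

definition Bx :: "nat \<Rightarrow> (nat \<Rightarrow> pt list list \<Rightarrow> 'a) \<Rightarrow> (nat \<Rightarrow> pt list list \<Rightarrow> 'a)" where
  "Bx n a = restr [Suc n, 2] (box 2 True)
     (\<lambda>m gs. a m [tl (gs!0), [if gs!1!1 = Top then gs!1!0 else Bot]])"

lemma prod_rep2: "gs \<in> prod_rep [k, n] m \<longleftrightarrow> (\<exists>x y. gs = [x, y] \<and> x \<in> hom k m \<and> y \<in> hom n m)"
  by (auto simp: prod_rep_iff list_all2_Cons2)
lemma prod_rep3: "gs \<in> prod_rep [k, n, l] m \<longleftrightarrow>
   (\<exists>x y z. gs = [x, y, z] \<and> x \<in> hom k m \<and> y \<in> hom n m \<and> z \<in> hom l m)"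
  by (auto simp: prod_rep_iff list_all2_Cons2)
lemma prod_rep1: "gs \<in> prod_rep [k] m \<longleftrightarrow> (\<exists>x. gs = [x] \<and> x \<in> hom k m)"
  by (auto simp: prod_rep_iff list_all2_Cons2)

lemma hom1: "x \<in> hom 1 m \<longleftrightarrow> (\<exists>p. x = [p] \<and> valid_pt m p)"
  by (auto simp: hom_Suc)
lemma hom1': "x \<in> hom (Suc 0) m \<longleftrightarrow> (\<exists>p. x = [p] \<and> valid_pt m p)"
  by (auto simp: hom_Suc)
lemma hom2: "x \<in> hom 2 m \<longleftrightarrow> (\<exists>p q. x = [p, q] \<and> valid_pt m p \<and> valid_pt m q)"
  by (auto simp: hom_Suc numeral_2_eq_2)

lemma Bx_val: "g \<in> hom (Suc n) m \<Longrightarrow> valid_pt m t \<Longrightarrow> valid_pt m s \<Longrightarrow>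
   (t = Bot \<or> s = Bot \<or> s = Top) \<Longrightarrow>
   Bx n a m [g, [t, s]] = a m [tl g, [if s = Top then t else Bot]]"
  unfolding Bx_def restr_def using box2[of m t s g] by (auto simp: prod_rep2 hom2)

lemma Bx_pmap:
  assumes A: "is_cset A" and a: "is_pmap A [n, 1] allp a"
  shows "is_pmap A [Suc n, 2] (box 2 True) (Bx n a)"
  unfolding is_pmap_def
proof (intro conjI allI impI)
  fix m gs assume h: "gs \<in> prod_rep [Suc n, 2] m \<and> box 2 True m gs"
  then obtain g t s where gs: "gs = [g, [t, s]]" "g \<in> hom (Suc n) m" "valid_pt m t" "valid_pt m s"
    by (auto simp: prod_rep2 hom2)
  with h have b: "t = Bot \<or> s = Bot \<or> s = Top" using box2 by auto
  have "[tl g, [if s = Top then t else Bot]] \<in> prod_rep [n, 1] m"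
    using gs by (auto simp: prod_rep2 hom1 hom_Suc)
  then show "Bx n a m gs \<in> cells A m"
    using a gs b by (simp add: Bx_val is_pmap_def allp_def)
next
  fix m m' f gs assume h: "gs \<in> prod_rep [Suc n, 2] m \<and> box 2 True m gs \<and> f \<in> hom m m'"
  then obtain g t s where gs: "gs = [g, [t, s]]" "g \<in> hom (Suc n) m" "valid_pt m t" "valid_pt m s"
    by (auto simp: prod_rep2 hom2)
  with h have b: "t = Bot \<or> s = Bot \<or> s = Top" using box2 by auto
  from h have f: "f \<in> hom m m'" by simp
  have g': "comp f g \<in> hom (Suc n) m'" using comp_hom gs f by blast
  have v: "valid_pt m' (app f t)" "valid_pt m' (app f s)" using app_valid f gs by auto
  have b': "app f t = Bot \<or> app f s = Bot \<or> app f s = Top" using b by auto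
  obtain p q where g: "g = p # q" "q \<in> hom n m" using gs by (auto simp: hom_Suc)
  have pr: "[q, [if s = Top then t else Bot]] \<in> prod_rep [n, 1] m"
    using gs g by (auto simp: prod_rep2 hom1)
  have "Bx n a m' (map (comp f) gs) = a m' [tl (comp f g), [if app f s = Top then app f t else Bot]]"
  proof -
    have "map (comp f) gs = [comp f g, [app f t, app f s]]" by (simp add: gs comp_def)
    then show ?thesis using Bx_val[OF g' v b', of a] by (simp only:)
  qed
  also have "\<dots> = a m' (map (comp f) [q, [if s = Top then t else Bot]])"
    using b g by (auto simp: comp_def)
  also have "\<dots> = act A m' f (a m [q, [if s = Top then t else Bot]])"
    using pmap_nat[OF a pr _ f] by (simp only: allp_def)
  also have "\<dots> = act A m' f (Bx n a m gs)"
  proof -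
    have "Bx n a m gs = a m [q, [if s = Top then t else Bot]]"
      using Bx_val[OF gs(2-4) b, of a] unfolding gs(1) g(1) by (simp only: list.sel)
    then show ?thesis by (simp only:)
  qed
  finally show "Bx n a m' (map (comp f) gs) = act A m' f (Bx n a m gs)" .
next
  fix m gs assume "\<not> (gs \<in> prod_rep [Suc n, 2] m \<and> box 2 True m gs)"
  then show "Bx n a m gs = undefined" unfolding Bx_def by (rule restr_out)
qed


definition conn where
  "conn \<phi> n a = restr [n, 1, 1] allp
     (\<lambda>m gs. \<phi> (2::nat) True (Suc n) (Bx n a) m [Bot # gs!0, [gs!2!0, gs!1!0]])"

lemma conn_val: "h \<in> hom n m \<Longrightarrow> valid_pt m s \<Longrightarrow> valid_pt m t \<Longrightarrow>
  conn \<phi> n a m [h, [s], [t]] = \<phi> 2 True (Suc n) (Bx n a) m [Bot # h, [t, s]]"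
  unfolding conn_def by (subst restr_in) (auto simp: prod_rep3 hom1 allp_def)

lemma exp_cells: "a \<in> cells (exp_cset X ks) n \<longleftrightarrow> is_pmap X (n # ks) allp a"
  by (simp add: exp_cset_def)

lemma exp_act: "act (exp_cset X ks) m f a = restr (m # ks) allp (\<lambda>m' gs. a m' (comp (hd gs) f # tl gs))"
  by (simp add: exp_cset_def)

context
  fixes A :: "'a cset" and \<phi>
  assumes A: "is_cset A" and uk: "uniform_kan A \<phi>"
begin

lemma Phi_props:
  assumes a: "is_pmap A [n, 1] allp a"
  shows "is_pmap A [Suc n, 2] allp (\<phi> 2 True (Suc n) (Bx n a))"
    "\<And>m gs. gs \<in> prod_rep [Suc n, 2] m \<Longrightarrow> box 2 True m gs \<Longrightarrow>
        \<phi> 2 True (Suc n) (Bx n a) m gs = Bx n a m gs"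
    "\<And>j \<alpha>. 1 \<le> j \<Longrightarrow> is_cmap (rep j) (rep (Suc n)) \<alpha> \<Longrightarrow>
          \<phi> 2 True j (restr [j, 2] (box 2 True) (\<lambda>m gs. Bx n a m [\<alpha> m (gs ! 0), gs ! 1]))
          = restr [j, 2] allp (\<lambda>m gs. \<phi> 2 True (Suc n) (Bx n a) m [\<alpha> m (gs ! 0), gs ! 1])"
proof -
  have b: "is_pmap A [Suc n, 2] (box 2 True) (Bx n a)" by (rule Bx_pmap[OF A a])
  have "1 \<le> (2::nat)" "1 \<le> Suc n" by auto
  note u = uk[unfolded uniform_kan_def, rule_format, OF conjI[OF this(1) conjI[OF this(2) b]]]
  show "is_pmap A [Suc n, 2] allp (\<phi> 2 True (Suc n) (Bx n a))" using u by blast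
  show "\<And>m gs. gs \<in> prod_rep [Suc n, 2] m \<Longrightarrow> box 2 True m gs \<Longrightarrow>
        \<phi> 2 True (Suc n) (Bx n a) m gs = Bx n a m gs" using u by blast
  show "\<And>j \<alpha>. 1 \<le> j \<Longrightarrow> is_cmap (rep j) (rep (Suc n)) \<alpha> \<Longrightarrow>
          \<phi> 2 True j (restr [j, 2] (box 2 True) (\<lambda>m gs. Bx n a m [\<alpha> m (gs ! 0), gs ! 1]))
          = restr [j, 2] allp (\<lambda>m gs. \<phi> 2 True (Suc n) (Bx n a) m [\<alpha> m (gs ! 0), gs ! 1])"
    using u by blast
qed

lemma conn_pmap:
  assumes a: "is_pmap A [n, 1] allp a"
  shows "is_pmap A [n, 1, 1] allp (conn \<phi> n a)"
  unfolding is_pmap_def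
proof (intro conjI allI impI)
  note P = Phi_props[OF a]
  fix m gs assume "gs \<in> prod_rep [n, 1, 1] m \<and> allp m gs"
  then obtain h s t where gs: "gs = [h, [s], [t]]" "h \<in> hom n m" "valid_pt m s" "valid_pt m t"
    by (auto simp: prod_rep3 hom1 hom1')
  have "[Bot # h, [t, s]] \<in> prod_rep [Suc n, 2] m" using gs by (auto simp: prod_rep2 hom2)
  then show "conn \<phi> n a m gs \<in> cells A m"
    using pmap_cells[OF P(1)] conn_val[OF gs(2-4), of \<phi> a] gs(1) by (simp add: allp_def)
next
  note P = Phi_props[OF a]
  fix m m' f gs assume h: "gs \<in> prod_rep [n, 1, 1] m \<and> allp m gs \<and> f \<in> hom m m'"
  then obtain h s t where gs: "gs = [h, [s], [t]]" "h \<in> hom n m" "valid_pt m s" "valid_pt m t"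
    by (auto simp: prod_rep3 hom1 hom1')
  from h have f: "f \<in> hom m m'" by simp
  have pr: "[Bot # h, [t, s]] \<in> prod_rep [Suc n, 2] m" using gs by (auto simp: prod_rep2 hom2)
  have h': "comp f h \<in> hom n m'" using comp_hom gs f by blast
  have v: "valid_pt m' (app f s)" "valid_pt m' (app f t)" using app_valid f gs by auto
  have "conn \<phi> n a m' (map (comp f) gs) = conn \<phi> n a m' [comp f h, [app f s], [app f t]]"
    using gs by (simp add: comp_def)
  also have "\<dots> = \<phi> 2 True (Suc n) (Bx n a) m' [Bot # comp f h, [app f t, app f s]]"
    by (rule conn_val[OF h' v, of \<phi> a])
  also have "\<dots> = \<phi> 2 True (Suc n) (Bx n a) m' (map (comp f) [Bot # h, [t, s]])"
    by (simp add: comp_def)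
  also have "\<dots> = act A m' f (\<phi> 2 True (Suc n) (Bx n a) m [Bot # h, [t, s]])"
    using pmap_nat[OF P(1) pr _ f] by (simp add: allp_def)
  also have "\<dots> = act A m' f (conn \<phi> n a m gs)"
    using conn_val[OF gs(2-4), of \<phi> a] gs(1) by simp
  finally show "conn \<phi> n a m' (map (comp f) gs) = act A m' f (conn \<phi> n a m gs)" .
next
  fix m gs assume "\<not> (gs \<in> prod_rep [n, 1, 1] m \<and> allp m gs)"
  then show "conn \<phi> n a m gs = undefined" unfolding conn_def by (rule restr_out)
qed

lemma conn_bdry:
  assumes a: "is_pmap A [n, 1] allp a" and h: "h \<in> hom n m" "s \<in> hom 1 m" "t \<in> hom 1 m"
  shows "conn \<phi> n a m [h, [Top], t] = a m [h, t] \<and>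
         conn \<phi> n a m [h, [Bot], t] = a m [h, [Bot]] \<and>
         conn \<phi> n a m [h, s, [Bot]] = a m [h, [Bot]]"
proof -
  note P = Phi_props[OF a]
  obtain s0 t0 where st: "s = [s0]" "t = [t0]" "valid_pt m s0" "valid_pt m t0" using h by (auto simp: hom1 hom1')
  have hs: "Bot # h \<in> hom (Suc n) m" using h by simp
  have gen: "conn \<phi> n a m [h, [y], [x]] = a m [h, [if y = Top then x else Bot]]"
    if "valid_pt m x" "valid_pt m y" "x = Bot \<or> y = Bot \<or> y = Top" for x y
  proof -
    have pr: "[Bot # h, [x, y]] \<in> prod_rep [Suc n, 2] m" using h that by (auto simp: prod_rep2 hom2)
    have bx: "box 2 True m [Bot # h, [x, y]]" using box2 that by blast
    show ?thesis using conn_val[OF h(1) that(2) that(1), of \<phi> a] P(2)[OF pr bx] Bx_val[OF hs that(1,2,3), of a]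
      by (simp only: list.sel)
  qed
  show ?thesis using gen[of t0 Top] gen[of t0 Bot] gen[of Bot s0] st by simp
qed

lemma conn_nat:
  assumes a: "is_pmap A [n, 1] allp a" and f: "f \<in> hom n m"
  shows "conn \<phi> m (act (exp_cset A [1]) m f a) = act (exp_cset A [1, 1]) m f (conn \<phi> n a)"
proof -
  note P = Phi_props[OF a]
  define F where "F = Bot # map shiftp f"
  define a' where "a' = act (exp_cset A [1]) m f a"
  have a'_def2: "a' = restr [m, 1] allp (\<lambda>m' gs. a m' (comp (hd gs) f # tl gs))"
    unfolding a'_def exp_act ..
  have F: "F \<in> hom (Suc n) (Suc m)"
    using f by (auto simp: F_def hom_iff shiftp_def valid_pt_def split: pt.splits)
  have compF: "comp g F = Bot # comp q f" if "g = p # q" for g p q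
    using that by (auto simp: F_def comp_def shiftp_def split: pt.splits)
  have cm: "is_cmap (rep (Suc m)) (rep (Suc n)) (\<lambda>m'' g. comp g F)"
    unfolding is_cmap_def rep_def
  proof (simp, intro conjI allI impI)
    fix m'' g assume "g \<in> hom (Suc m) m''"
    then show "comp g F \<in> hom (Suc n) m''" using comp_hom[OF F] by blast
  next
    fix m1 m2 f' g assume h: "f' \<in> hom m1 m2 \<and> g \<in> hom (Suc m) m1"
    then have "F \<in> hom (Suc n) (length g)" using F by (simp add: hom_iff)
    then show "comp (comp f' g) F = comp f' (comp g F)" by (simp add: comp_assoc)
  qed
  have B: "Bx m a' = restr [Suc m, 2] (box 2 True) (\<lambda>m'' gs. Bx n a m'' [comp (gs ! 0) F, gs ! 1])"
  proof (rule ext, rule ext)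
    fix m'' gs
    show "Bx m a' m'' gs = restr [Suc m, 2] (box 2 True) (\<lambda>m'' gs. Bx n a m'' [comp (gs ! 0) F, gs ! 1]) m'' gs"
    proof (cases "gs \<in> prod_rep [Suc m, 2] m'' \<and> box 2 True m'' gs")
      case True
      then obtain g t s where gs: "gs = [g, [t, s]]" "g \<in> hom (Suc m) m''" "valid_pt m'' t" "valid_pt m'' s"
        by (auto simp: prod_rep2 hom2)
      with True have b: "t = Bot \<or> s = Bot \<or> s = Top" using box2 by auto
      obtain p q where g: "g = p # q" "q \<in> hom m m''" using gs by (auto simp: hom_Suc)
      have gF: "comp g F \<in> hom (Suc n) m''" using comp_hom[OF F gs(2)] .
      have pr: "[q, [if s = Top then t else Bot]] \<in> prod_rep [m, 1] m''"
        using g gs by (auto simp: prod_rep2 hom1)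
      have "Bx m a' m'' gs = a' m'' [q, [if s = Top then t else Bot]]"
        using Bx_val[OF gs(2-4) b, of a'] gs(1) g(1) by (simp only: list.sel)
      also have "\<dots> = a m'' [comp q f, [if s = Top then t else Bot]]"
        unfolding a'_def2 using pr by (subst restr_in) (auto simp: allp_def)
      also have "\<dots> = Bx n a m'' [comp g F, [t, s]]"
        using Bx_val[OF gF gs(3,4) b, of a] compF[OF g(1)] by (simp only: list.sel)
      also have "\<dots> = restr [Suc m, 2] (box 2 True) (\<lambda>m'' gs. Bx n a m'' [comp (gs ! 0) F, gs ! 1]) m'' gs"
        using True gs(1) by (simp add: restr_in)
      finally show ?thesis .
    next
      case False
      then show ?thesis unfolding Bx_def by (simp add: restr_out)
    qed
  qed
  have U: "\<phi> 2 True (Suc m) (Bx m a') = restr [Suc m, 2] allp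
     (\<lambda>m'' gs. \<phi> 2 True (Suc n) (Bx n a) m'' [comp (gs ! 0) F, gs ! 1])"
    unfolding B using P(3)[OF _ cm] by simp
  show ?thesis unfolding a'_def[symmetric]
  proof (rule ext, rule ext)
    fix m' gs
    show "conn \<phi> m a' m' gs = act (exp_cset A [1, 1]) m f (conn \<phi> n a) m' gs"
    proof (cases "gs \<in> prod_rep [m, 1, 1] m'")
      case True
      then obtain h s t where gs: "gs = [h, [s], [t]]" "h \<in> hom m m'" "valid_pt m' s" "valid_pt m' t"
        by (auto simp: prod_rep3 hom1 hom1')
      have hf: "comp h f \<in> hom n m'" using comp_hom[OF f gs(2)] .
      have pr: "[Bot # h, [t, s]] \<in> prod_rep [Suc m, 2] m'" using gs by (auto simp: prod_rep2 hom2)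
      have "conn \<phi> m a' m' gs = \<phi> 2 True (Suc m) (Bx m a') m' [Bot # h, [t, s]]"
        using conn_val[OF gs(2-4), of \<phi> a'] gs(1) by simp
      also have "\<dots> = \<phi> 2 True (Suc n) (Bx n a) m' [Bot # comp h f, [t, s]]"
        unfolding U using pr compF[of "Bot # h" Bot h] by (simp add: restr_in allp_def)
      also have "\<dots> = conn \<phi> n a m' [comp h f, [s], [t]]"
        using conn_val[OF hf gs(3,4), of \<phi> a] by simp
      also have "\<dots> = act (exp_cset A [1, 1]) m f (conn \<phi> n a) m' gs"
        unfolding exp_act using True gs(1) by (simp add: restr_in allp_def)
      finally show ?thesis .
    next
      case False
      then show ?thesis unfolding conn_def exp_act by (simp add: restr_out allp_def)
    qed
  qed
qed

lemma conn_normal: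
  assumes nk: "normal_kan A \<phi>" and x: "is_pmap A [n] allp x"
  shows "conn \<phi> n (restr [n, 1] allp (\<lambda>m gs. x m [hd gs])) = restr [n, 1, 1] allp (\<lambda>m gs. x m [hd gs])"
proof -
  define a where "a = restr [n, 1] allp (\<lambda>m gs. x m [hd gs])"
  define c' where "c' = restr [Suc n, 1] allp (\<lambda>m gs. x m [tl (gs ! 0)])"
  have c': "is_pmap A [Suc n, 1] allp c'"
    unfolding is_pmap_def
  proof (intro conjI allI impI)
    fix m gs assume "gs \<in> prod_rep [Suc n, 1] m \<and> allp m gs"
    then obtain g s where gs: "gs = [g, [s]]" "g \<in> hom (Suc n) m" "valid_pt m s"
      by (auto simp: prod_rep2 hom1 hom1')
    have "[tl g] \<in> prod_rep [n] m" using gs by (auto simp: prod_rep1 hom_Suc)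
    then show "c' m gs \<in> cells A m"
      unfolding c'_def using gs pmap_cells[OF x] by (subst restr_in) (auto simp: prod_rep2 hom1 allp_def)
  next
    fix m m' f gs assume h: "gs \<in> prod_rep [Suc n, 1] m \<and> allp m gs \<and> f \<in> hom m m'"
    then obtain g s where gs: "gs = [g, [s]]" "g \<in> hom (Suc n) m" "valid_pt m s"
      by (auto simp: prod_rep2 hom1 hom1')
    from h have f: "f \<in> hom m m'" by simp
    have g': "comp f g \<in> hom (Suc n) m'" using comp_hom gs f by blast
    have pr: "[tl g] \<in> prod_rep [n] m" using gs by (auto simp: prod_rep1 hom_Suc)
    have pr': "map (comp f) gs \<in> prod_rep [Suc n, 1] m'"
      using gs g' app_valid[OF f] by (auto simp: prod_rep2 hom1 comp_def)
    have "c' m' (map (comp f) gs) = x m' [tl (comp f g)]"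
      unfolding c'_def using pr' gs by (simp add: restr_in allp_def)
    also have "\<dots> = x m' (map (comp f) [tl g])" by (simp add: comp_def map_tl)
    also have "\<dots> = act A m' f (x m [tl g])" using pmap_nat[OF x pr _ f] by (simp add: allp_def)
    also have "\<dots> = act A m' f (c' m gs)"
      unfolding c'_def using h gs by (simp add: restr_in allp_def)
    finally show "c' m' (map (comp f) gs) = act A m' f (c' m gs)" .
  next
    fix m gs assume "\<not> (gs \<in> prod_rep [Suc n, 1] m \<and> allp m gs)"
    then show "c' m gs = undefined" unfolding c'_def by (rule restr_out)
  qed
  have N: "\<phi> 2 True (Suc n) (restr [Suc n, 2] (box 2 True) (\<lambda>m gs. c' m [gs ! 0, tl (gs ! 1)]))
       = restr [Suc n, 2] allp (\<lambda>m gs. c' m [gs ! 0, tl (gs ! 1)])"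
    using nk[unfolded normal_kan_def, rule_format, of "Suc n" 1 c' True] c' by (simp add: numeral_2_eq_2)
  have B: "Bx n a = restr [Suc n, 2] (box 2 True) (\<lambda>m gs. c' m [gs ! 0, tl (gs ! 1)])"
  proof (rule ext, rule ext)
    fix m gs
    show "Bx n a m gs = restr [Suc n, 2] (box 2 True) (\<lambda>m gs. c' m [gs ! 0, tl (gs ! 1)]) m gs"
    proof (cases "gs \<in> prod_rep [Suc n, 2] m \<and> box 2 True m gs")
      case True
      then obtain g t s where gs: "gs = [g, [t, s]]" "g \<in> hom (Suc n) m" "valid_pt m t" "valid_pt m s"
        by (auto simp: prod_rep2 hom2)
      with True have b: "t = Bot \<or> s = Bot \<or> s = Top" using box2 by auto
      have pr: "[tl g, [if s = Top then t else Bot]] \<in> prod_rep [n, 1] m"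
        using gs by (auto simp: prod_rep2 hom1 hom_Suc)
      have pr2: "[g, [s]] \<in> prod_rep [Suc n, 1] m" using gs by (auto simp: prod_rep2 hom1)
      have "Bx n a m gs = a m [tl g, [if s = Top then t else Bot]]"
        using Bx_val[OF gs(2-4) b, of a] gs(1) by (simp only:)
      also have "\<dots> = x m [tl g]" unfolding a_def using pr by (simp add: restr_in allp_def)
      also have "\<dots> = c' m [g, [s]]" unfolding c'_def using pr2 by (simp add: restr_in allp_def)
      also have "\<dots> = restr [Suc n, 2] (box 2 True) (\<lambda>m gs. c' m [gs ! 0, tl (gs ! 1)]) m gs"
        using True gs(1) by (simp add: restr_in)
      finally show ?thesis .
    next
      case False
      then show ?thesis unfolding Bx_def by (simp add: restr_out)
    qed
  qed
  show ?thesis unfolding a_def[symmetric]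
  proof (rule ext, rule ext)
    fix m gs
    show "conn \<phi> n a m gs = restr [n, 1, 1] allp (\<lambda>m gs. x m [hd gs]) m gs"
    proof (cases "gs \<in> prod_rep [n, 1, 1] m")
      case True
      then obtain h s t where gs: "gs = [h, [s], [t]]" "h \<in> hom n m" "valid_pt m s" "valid_pt m t"
        by (auto simp: prod_rep3 hom1 hom1')
      have pr: "[Bot # h, [t, s]] \<in> prod_rep [Suc n, 2] m" using gs by (auto simp: prod_rep2 hom2)
      have pr2: "[Bot # h, [s]] \<in> prod_rep [Suc n, 1] m" using gs by (auto simp: prod_rep2 hom1)
      have "conn \<phi> n a m gs = \<phi> 2 True (Suc n) (Bx n a) m [Bot # h, [t, s]]"
        using conn_val[OF gs(2-4), of \<phi> a] gs(1) by simp
      also have "\<dots> = c' m [Bot # h, [s]]" unfolding B N using pr by (simp add: restr_in allp_def)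
      also have "\<dots> = x m [h]" unfolding c'_def using pr2 by (simp add: restr_in allp_def)
      also have "\<dots> = restr [n, 1, 1] allp (\<lambda>m gs. x m [hd gs]) m gs"
        using True gs(1) by (simp add: restr_in allp_def)
      finally show ?thesis .
    next
      case False
      then show ?thesis unfolding conn_def by (simp add: restr_out)
    qed
  qed
qed

end


theorem lemma3p11:
  fixes A :: "'a cset"
  assumes "normal_uniform_kan A"
  shows "\<exists>c. is_connection A c \<and> normal_connection A c"
proof -
  obtain \<phi> where A: "is_cset A" and uk: "uniform_kan A \<phi>" and nk: "normal_kan A \<phi>"
    using assms unfolding normal_uniform_kan_def by blast
  have "is_connection A (conn \<phi>)"
    unfolding is_connection_def is_cmap_def
  proof (intro conjI allI impI)
    fix n a assume "a \<in> cells (exp_cset A [1]) n"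
    then show "conn \<phi> n a \<in> cells (exp_cset A [1, 1]) n"
      using conn_pmap[OF A uk] by (simp add: exp_cells)
  next
    fix n m f a assume "f \<in> hom n m \<and> a \<in> cells (exp_cset A [1]) n"
    then show "conn \<phi> m (act (exp_cset A [1]) m f a) = act (exp_cset A [1, 1]) m f (conn \<phi> n a)"
      using conn_nat[OF A uk] by (simp add: exp_cells)
  next
    fix n a m h s t assume a: "a \<in> cells (exp_cset A [1]) n" and hh: "h \<in> hom n m \<and> s \<in> hom 1 m \<and> t \<in> hom 1 m"
    from a have pa: "is_pmap A [n, 1] allp a" by (simp add: exp_cells)
    have "conn \<phi> n a m [h, [Top], t] = a m [h, t] \<and>
         conn \<phi> n a m [h, [Bot], t] = a m [h, [Bot]] \<and>
         conn \<phi> n a m [h, s, [Bot]] = a m [h, [Bot]]"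
      using conn_bdry[OF A uk pa] hh by blast
    then show "conn \<phi> n a m [h, [Top], t] = a m [h, t]"
      "conn \<phi> n a m [h, [Bot], t] = a m [h, [Bot]]"
      "conn \<phi> n a m [h, s, [Bot]] = a m [h, [Bot]]" by auto
  qed
  moreover have "normal_connection A (conn \<phi>)"
    unfolding normal_connection_def using conn_normal[OF A uk nk] by blast
  ultimately show ?thesis by blast
qed

end
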